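(* Let $\mathcal G$ be an input-output network with input nodes $\iota_1,\dots,\iota_n$ and output node $o$, with the other nodes partitioned into $\sigma$-nodes (upstream from $o$ and downstream from at least one input node), $d$-nodes (not downstream from any input node) and $u$-nodes (downstream from at least one input node but not upstream from $o$). Consider an admissible system $$\dot x_{\iota_m}=f_{\iota_m}(x_{\iota},x_\sigma,x_d,x_o,\mathcal I),\quad \dot x_\sigma=f_\sigma(x_\iota,x_\sigma,x_d,x_o),\quad \dot x_u=f_u(x_\iota,x_\sigma,x_u,x_d,x_o),\quad \dot x_d=f_d(x_d),\quad \dot x_o=f_o(x_\iota,x_\sigma,x_d,x_o)$$ with a smooth family of linearly stable equilibria $\tilde X(\mathcal I)$ near $\mathcal I_0$, whose $d$-component is $x_d^*$ and whose output component is the input-output function $x_o(\mathcal I)$. Let $x_o^c(\mathcal I)$ be the input-output function (output component of the corresponding family of linearly stable equilibria) of the associated core admissible system obtained by freezing $x_d$ at $x_d^*$: $$\dot x_{\iota_m}=f_{\iota_m}(x_\iota,x_\sigma,x_d^*,x_o,\mathcal I),\quad \dot x_\sigma=f_\sigma(x_\iota,x_\sigma,x_d^*,x_o),\quad \dot x_o=f_o(x_\iota,x_\sigma,x_d^*,x_o).$$ Then $x_o^c$ has a point of infinitesimal homeostasis at $\mathcal I_0$ (i.e. $(x_o^c)'(\mathcal I_0)=0$) if and only if $x_o$ has a point of infinitesimal homeostasis at $\mathcal I_0$ (i.e. $x_o'(\mathcal I_0)=0$).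
   Context: A node $b$ is downstream from $a$ (and $a$ upstream from $b$) if there is a directed path from $a$ to $b$; every node is upstream and downstream from itself. An admissible system assigns a real variable to each node, is smooth, only the input-node equations depend on the scalar input parameter $\mathcal I$, $\partial f_{\iota_m}/\partial\mathcal I\neq0$, and $\partial f_j/\partial x_\ell\equiv0$ unless there is an arrow $\ell\to j$. An equilibrium is linearly stable if all eigenvalues of the Jacobian there have negative real part. *)

theory Defs
  imports "HOL-Analysis.Analysis"
begin

text \<open>Nodes are the elements of a finite type 'n; arrows are a relation E;
  b is downstream from a iff (a,b) is in the reflexive transitive closure of E.\<close>

definition downstream :: "('n \<times> 'n) set \<Rightarrow> 'n \<Rightarrow> 'n \<Rightarrow> bool" where
  "downstream E a b \<longleftrightarrow> (a, b) \<in> E\<^sup>*"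

definition io_network :: "'n set \<Rightarrow> 'n \<Rightarrow> ('n \<times> 'n) set \<Rightarrow> bool" where
  "io_network Inp out E \<longleftrightarrow> Inp \<noteq> {} \<and> out \<notin> Inp \<and> (\<forall>i\<in>Inp. downstream E i out)"

definition sigma_nodes :: "'n set \<Rightarrow> 'n \<Rightarrow> ('n \<times> 'n) set \<Rightarrow> 'n set" where
  "sigma_nodes Inp out E = {j. j \<notin> Inp \<and> j \<noteq> out \<and> downstream E j out \<and>
                              (\<exists>i\<in>Inp. downstream E i j)}"

definition d_nodes :: "'n set \<Rightarrow> 'n \<Rightarrow> ('n \<times> 'n) set \<Rightarrow> 'n set" where
  "d_nodes Inp out E = {j. j \<notin> Inp \<and> j \<noteq> out \<and> (\<forall>i\<in>Inp. \<not> downstream E i j)}"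

definition u_nodes :: "'n set \<Rightarrow> 'n \<Rightarrow> ('n \<times> 'n) set \<Rightarrow> 'n set" where
  "u_nodes Inp out E = {j. j \<notin> Inp \<and> j \<noteq> out \<and> \<not> downstream E j out \<and>
                          (\<exists>i\<in>Inp. downstream E i j)}"

definition core_nodes :: "'n set \<Rightarrow> 'n \<Rightarrow> ('n \<times> 'n) set \<Rightarrow> 'n set" where
  "core_nodes Inp out E = Inp \<union> sigma_nodes Inp out E \<union> {out}"

definition dirderiv :: "('a::real_normed_vector \<Rightarrow> real) \<Rightarrow> 'a \<Rightarrow> 'a \<Rightarrow> real" where
  "dirderiv g v = (\<lambda>x. frechet_derivative g (at x) v)"

fun iter_dirderiv :: "'a list \<Rightarrow> ('a::real_normed_vector \<Rightarrow> real) \<Rightarrow> 'a \<Rightarrow> real" where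
  "iter_dirderiv [] g = g"
| "iter_dirderiv (v # vs) g = dirderiv (iter_dirderiv vs g) v"

definition smooth_on :: "'a::real_normed_vector set \<Rightarrow> ('a \<Rightarrow> real) \<Rightarrow> bool" where
  "smooth_on U g \<longleftrightarrow> (\<forall>vs. \<forall>x\<in>U. iter_dirderiv vs g differentiable (at x))"

text \<open>A system is f :: 'n => real^'n => real => real, f j x I being the
  right-hand side of the equation for node j at state x and input parameter I.\<close>

definition upd :: "real^'n \<Rightarrow> 'n \<Rightarrow> real \<Rightarrow> real^'n" where
  "upd x l t = (\<chi> i. if i = l then t else x $ i)"

definition jac :: "('n \<Rightarrow> real^'n \<Rightarrow> real \<Rightarrow> real) \<Rightarrow> real^'n \<Rightarrow> real \<Rightarrow> real^'n^'n" where
  "jac f x I = (\<chi> j l. deriv (\<lambda>t. f j (upd x l t) I) (x $ l))"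

text \<open>Complex eigenvalue of the principal submatrix of A indexed by S.\<close>
definition sub_eigenvalue :: "'n set \<Rightarrow> real^'n^'n \<Rightarrow> complex \<Rightarrow> bool" where
  "sub_eigenvalue S A \<mu> \<longleftrightarrow>
     (\<exists>v :: 'n \<Rightarrow> complex. (\<exists>i\<in>S. v i \<noteq> 0) \<and>
        (\<forall>j\<in>S. (\<Sum>l\<in>S. complex_of_real (A $ j $ l) * v l) = \<mu> * v j))"

definition linearly_stable :: "'n set \<Rightarrow> real^'n^'n \<Rightarrow> bool" where
  "linearly_stable S A \<longleftrightarrow> (\<forall>\<mu>. sub_eigenvalue S A \<mu> \<longrightarrow> Re \<mu> < 0)"

definition admissible ::
  "'n set \<Rightarrow> ('n \<times> 'n) set \<Rightarrow> ('n \<Rightarrow> real^'n \<Rightarrow> real \<Rightarrow> real) \<Rightarrow> bool" where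
  "admissible Inp E f \<longleftrightarrow>
     (\<forall>j. smooth_on UNIV (\<lambda>p. f j (fst p) (snd p))) \<and>
     (\<forall>j. j \<notin> Inp \<longrightarrow> (\<forall>x I I'. f j x I = f j x I')) \<and>
     (\<forall>i\<in>Inp. \<forall>x I. deriv (\<lambda>J. f i x J) I \<noteq> 0) \<and>
     (\<forall>j l. l \<noteq> j \<and> (l, j) \<notin> E \<longrightarrow>
        (\<forall>x I. deriv (\<lambda>t. f j (upd x l t) I) (x $ l) = 0))"

definition freeze :: "'n set \<Rightarrow> real^'n \<Rightarrow> real^'n \<Rightarrow> real^'n" where
  "freeze D xs y = (\<chi> i. if i \<in> D then xs $ i else y $ i)"

end

theory Submission
  imports Defs
begin

lemma F_diff:
  assumes "admissible Inp E f"
  shows "(\<lambda>p. f j (fst p) (snd p)) differentiable (at q)"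
  using assms unfolding admissible_def smooth_on_def
  by (metis iter_dirderiv.simps(1) UNIV_I)

lemma upd_eq: "upd x l t = x + (t - x $ l) *\<^sub>R axis l 1"
  by (simp add: upd_def vec_eq_iff axis_def)

lemma upd_same[simp]: "upd x l (x $ l) = x"
  by (simp add: upd_def vec_eq_iff)

lemma upd_upd[simp]: "upd (upd x l s) l t = upd x l t"
  by (simp add: upd_def vec_eq_iff)

lemma upd_nth[simp]: "upd x l t $ i = (if i = l then t else x $ i)"
  by (simp add: upd_def)

lemma partial_x:
  fixes f :: "'n::finite \<Rightarrow> real^'n \<Rightarrow> real \<Rightarrow> real"
  assumes F: "((\<lambda>p. f j (fst p) (snd p)) has_derivative F') (at (x, I))"
  shows "((\<lambda>t. f j (upd x l t) I) has_field_derivative F' (axis l 1, 0)) (at (x $ l))"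
proof -
  have inner: "((\<lambda>t. (upd x l t, I)) has_derivative (\<lambda>h. (h *\<^sub>R axis l 1, 0))) (at (x $ l))"
    unfolding upd_eq
    by (auto intro!: derivative_eq_intros)
  have comp: "((\<lambda>t. f j (upd x l t) I) has_derivative (\<lambda>h. F' (h *\<^sub>R axis l 1, 0))) (at (x $ l))"
    using has_derivative_compose[OF inner, of "\<lambda>p. f j (fst p) (snd p)" F'] F by simp
  have lin: "linear F'" using F by (rule has_derivative_linear)
  have "(\<lambda>h. F' (h *\<^sub>R axis l 1, 0)) = (*) (F' (axis l 1, 0))"
  proof
    fix h :: real
    have "(h *\<^sub>R axis l 1, 0::real) = h *\<^sub>R (axis l 1, 0)" by simp
    then show "F' (h *\<^sub>R axis l 1, 0) = F' (axis l 1, 0) * h"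
      using linear_scale[OF lin, of h "(axis l 1, 0)"] by (simp add: mult.commute)
  qed
  then show ?thesis using comp by (simp add: has_field_derivative_def)
qed

lemma partial_I:
  fixes f :: "'n::finite \<Rightarrow> real^'n \<Rightarrow> real \<Rightarrow> real"
  assumes F: "((\<lambda>p. f j (fst p) (snd p)) has_derivative F') (at (x, I))"
  shows "((\<lambda>J. f j x J) has_field_derivative F' (0, 1)) (at I)"
proof -
  have inner: "((\<lambda>t. (x, t)) has_derivative (\<lambda>h. (0, h))) (at I)"
    by (auto intro!: derivative_eq_intros)
  have comp: "((\<lambda>t. f j x t) has_derivative (\<lambda>h. F' (0, h))) (at I)"
    using has_derivative_compose[OF inner, of "\<lambda>p. f j (fst p) (snd p)" F'] F by simp
  have lin: "linear F'" using F by (rule has_derivative_linear)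
  have "(\<lambda>h. F' (0, h)) = (*) (F' (0, 1))"
  proof
    fix h :: real
    have "(0, h) = h *\<^sub>R (0::real^'n, 1::real)" by simp
    then show "F' (0, h) = F' (0, 1) * h"
      using linear_scale[OF lin, of h "(0, 1)"] by (simp add: mult.commute)
  qed
  then show ?thesis using comp by (simp add: has_field_derivative_def)
qed

lemma const_coord:
  fixes f :: "'n::finite \<Rightarrow> real^'n \<Rightarrow> real \<Rightarrow> real"
  assumes adm: "admissible Inp E f" and nl: "l \<noteq> j" "(l, j) \<notin> E"
  shows "f j (upd x l t) I = f j x I"
proof -
  have D: "((\<lambda>t. f j (upd x l t) I) has_field_derivative 0) (at s within UNIV)" for s
  proof -
    obtain F' where F: "((\<lambda>p. f j (fst p) (snd p)) has_derivative F') (at (upd x l s, I))"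
      using F_diff[OF adm] unfolding differentiable_def by blast
    have d: "((\<lambda>t. f j (upd x l t) I) has_field_derivative F' (axis l 1, 0)) (at s)"
      using partial_x[where f=f and j=j, OF F, of l] by simp
    have "deriv (\<lambda>t. f j (upd (upd x l s) l t) I) (upd x l s $ l) = 0"
      using adm nl unfolding admissible_def by blast
    then have "F' (axis l 1, 0) = 0" using DERIV_imp_deriv[OF d] by simp
    then show ?thesis using d by simp
  qed
  obtain c where "\<forall>t\<in>UNIV. f j (upd x l t) I = c"
    using has_field_derivative_zero_constant[OF convex_UNIV D] by blast
  then have "f j (upd x l t) I = f j (upd x l (x $ l)) I" by (metis UNIV_I)
  then show ?thesis by simp
qed

lemma indep_aux:
  fixes f :: "'n::finite \<Rightarrow> real^'n \<Rightarrow> real \<Rightarrow> real"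
  assumes adm: "admissible Inp E f" and fin: "finite D"
  shows "\<forall>x y. {l. x $ l \<noteq> y $ l} \<subseteq> D \<longrightarrow> (\<forall>l\<in>D. l \<noteq> j \<and> (l, j) \<notin> E) \<longrightarrow> f j x I = f j y I"
  using fin
proof (induction D rule: finite_induct)
  case empty
  show ?case
  proof (intro allI impI)
    fix x y :: "real^'n"
    assume "{l. x $ l \<noteq> y $ l} \<subseteq> {}"
    then have "x = y" by (auto simp: vec_eq_iff)
    then show "f j x I = f j y I" by simp
  qed
next
  case (insert a D)
  show ?case
  proof (intro allI impI)
    fix x y :: "real^'n"
    assume sub: "{l. x $ l \<noteq> y $ l} \<subseteq> insert a D" and np: "\<forall>l\<in>insert a D. l \<noteq> j \<and> (l, j) \<notin> E"
    have "f j (upd x a (y $ a)) I = f j x I"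
      using const_coord[OF adm] np by blast
    moreover have "{l. upd x a (y $ a) $ l \<noteq> y $ l} \<subseteq> D"
      using sub by (auto simp: subset_iff split: if_splits)
    then have "f j (upd x a (y $ a)) I = f j y I"
      using insert.IH np by blast
    ultimately show "f j x I = f j y I" by simp
  qed
qed

lemma indep:
  fixes f :: "'n::finite \<Rightarrow> real^'n \<Rightarrow> real \<Rightarrow> real"
  assumes adm: "admissible Inp E f"
    and agree: "\<And>l. l = j \<or> (l, j) \<in> E \<Longrightarrow> x $ l = y $ l"
  shows "f j x I = f j y I"
  using indep_aux[OF adm, of "{l. x $ l \<noteq> y $ l}" j I] agree by auto

lemma vec_sum_axis: "(\<Sum>l\<in>UNIV. (x $ l) *\<^sub>R axis l (1::real)) = (x::real^'n::finite)"
  using basis_expansion[of x] by (simp add: scalar_mult_eq_scaleR)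

lemma chain:
  fixes f :: "'n::finite \<Rightarrow> real^'n \<Rightarrow> real \<Rightarrow> real"
  assumes adm: "admissible Inp E f"
    and Zd: "\<And>l. ((\<lambda>I. Z I $ l) has_field_derivative z l) (at I0)"
    and Z0: "Z I0 = x0" and S: "open S" "I0 \<in> S"
    and eq: "\<And>I. I \<in> S \<Longrightarrow> f j (Z I) I = 0"
  shows "(\<Sum>l\<in>UNIV. jac f x0 I0 $ j $ l * z l) + deriv (\<lambda>J. f j x0 J) I0 = 0"
proof -
  obtain F' where F: "((\<lambda>p. f j (fst p) (snd p)) has_derivative F') (at (x0, I0))"
    using F_diff[OF adm] unfolding differentiable_def by blast
  have lin: "linear F'" using F by (rule has_derivative_linear)
  have jac: "jac f x0 I0 $ j $ l = F' (axis l 1, 0)" for l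
    using DERIV_imp_deriv[OF partial_x[where f=f and j=j, OF F, of l]] by (simp add: jac_def)
  have dI: "deriv (\<lambda>J. f j x0 J) I0 = F' (0, 1)"
    using DERIV_imp_deriv[OF partial_I[where f=f and j=j, OF F]] by simp
  have Zfun: "Z = (\<lambda>I. \<Sum>l\<in>UNIV. (Z I $ l) *\<^sub>R axis l (1::real))"
    by (rule ext, rule sym, rule vec_sum_axis)
  have Zd': "((\<lambda>I. Z I $ l) has_derivative (\<lambda>h. z l * h)) (at I0)" for l
    using Zd[of l] by (simp add: has_field_derivative_def)
  have "((\<lambda>I. \<Sum>l\<in>UNIV. (Z I $ l) *\<^sub>R axis l (1::real)) has_derivative
        (\<lambda>h. \<Sum>l\<in>UNIV. (z l * h) *\<^sub>R axis l (1::real))) (at I0)"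
    by (intro has_derivative_sum has_derivative_scaleR_left Zd')
  then have ZD: "(Z has_derivative (\<lambda>h. \<Sum>l\<in>UNIV. (z l * h) *\<^sub>R axis l (1::real))) (at I0)"
    by (simp only: Zfun[symmetric])
  have P: "((\<lambda>I. (Z I, I)) has_derivative (\<lambda>h. (\<Sum>l\<in>UNIV. (z l * h) *\<^sub>R axis l (1::real), h))) (at I0)"
    by (intro has_derivative_Pair ZD has_derivative_ident)
  have C: "((\<lambda>I. f j (Z I) I) has_derivative (\<lambda>h. F' (\<Sum>l\<in>UNIV. (z l * h) *\<^sub>R axis l (1::real), h))) (at I0)"
    using has_derivative_compose[OF P, of "\<lambda>p. f j (fst p) (snd p)" F'] F Z0 by simp
  have C0: "((\<lambda>I. f j (Z I) I) has_derivative (\<lambda>h. 0)) (at I0)"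
    using has_derivative_transform_within_open[OF has_derivative_const S, of 0 "\<lambda>I. f j (Z I) I" UNIV] eq by force
  have "(\<lambda>h. F' (\<Sum>l\<in>UNIV. (z l * h) *\<^sub>R axis l (1::real), h)) = (\<lambda>h. 0)"
    using has_derivative_unique[OF C C0] .
  then have z: "F' (\<Sum>l\<in>UNIV. z l *\<^sub>R axis l (1::real), 1) = 0"
    by (drule_tac x=1 in fun_cong) simp
  have "(\<Sum>l\<in>UNIV. z l *\<^sub>R axis l (1::real), 1::real) =
        (\<Sum>l\<in>UNIV. z l *\<^sub>R (axis l (1::real), 0::real)) + (0, 1)"
    by (simp add: prod_eq_iff fst_sum snd_sum)
  then have "F' (\<Sum>l\<in>UNIV. z l *\<^sub>R axis l (1::real), 1) =
      (\<Sum>l\<in>UNIV. z l * F' (axis l 1, 0)) + F' (0, 1)"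
  proof -
    have sc: "F' (z l *\<^sub>R axis l 1, 0) = z l * F' (axis l 1, 0)" for l
      using linear_scale[OF lin, of "z l" "(axis l 1, 0)"] by simp
    show ?thesis using lin \<open>_ = _ + (0, 1)\<close> by (simp add: linear_add linear_sum sc)
  qed
  then show ?thesis using z jac dI by (simp add: mult.commute)
qed


lemma mv_comp: "(A *v x) $ j = (\<Sum>l\<in>UNIV. A $ j $ l * x $ l)"
  by (simp add: matrix_vector_mult_def)

lemma block_sing:
  fixes J :: "real^'n::finite^'n"
  assumes zero: "\<And>j l. j \<in> S \<Longrightarrow> l \<notin> S \<Longrightarrow> J $ j $ l = 0"
    and vS: "\<And>l. l \<notin> S \<Longrightarrow> v $ l = 0" and v0: "v \<noteq> 0"
    and Jv: "\<And>j. j \<in> S \<Longrightarrow> (J *v v) $ j = 0"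
  shows "\<exists>w. w \<noteq> 0 \<and> J *v w = 0"
proof -
  define A :: "real^'n^'n" where
    "A = (\<chi> j l. if j \<in> S \<or> l \<in> S then (if j = l then 1 else 0) else J $ j $ l)"
  have AS: "(A *v w) $ j = w $ j" if "j \<in> S" for w j
  proof -
    have "(A *v w) $ j = (\<Sum>l\<in>UNIV. (if l = j then w $ j else 0))"
      unfolding mv_comp A_def using that by (intro sum.cong) auto
    then show ?thesis by simp
  qed
  have AnS: "(A *v w) $ j = (J *v w) $ j" if "j \<notin> S" "\<And>l. l \<in> S \<Longrightarrow> w $ l = 0" for w j
    unfolding mv_comp A_def using that by (intro sum.cong) auto
  have JS: "(J *v w) $ j = 0" if "j \<in> S" "\<And>l. l \<in> S \<Longrightarrow> w $ l = 0" for w j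
    unfolding mv_comp using that zero by (intro sum.neutral) auto
  show ?thesis
  proof (cases "inj ((*v) A)")
    case True
    then obtain B where "B ** A = mat 1" using matrix_left_invertible_injective by blast
    then have AB: "A ** B = mat 1" using matrix_left_right_inverse by blast
    define r :: "real^'n" where "r = (\<chi> j. if j \<in> S then 0 else - (J *v v) $ j)"
    define w where "w = B *v r"
    have Aw: "A *v w = r" unfolding w_def by (simp add: matrix_vector_mul_assoc AB)
    have wS: "w $ l = 0" if "l \<in> S" for l
      using AS[OF that, of w] Aw that by (simp add: r_def)
    have "J *v (v + w) = 0"
    proof (subst vec_eq_iff, intro allI)
      fix j
      show "(J *v (v + w)) $ j = 0 $ j"
      proof (cases "j \<in> S")
        case True
        then show ?thesis using Jv JS[OF True wS] by (simp add: matrix_vector_right_distrib)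
      next
        case False
        then show ?thesis using AnS[OF False wS] Aw by (simp add: matrix_vector_right_distrib r_def)
      qed
    qed
    moreover have "v + w \<noteq> 0"
    proof
      assume "v + w = 0"
      then have "v $ l = 0" for l using wS[of l] vS[of l] by (cases "l \<in> S") (auto simp: vec_eq_iff, metis add.right_neutral)
      then show False using v0 by (simp add: vec_eq_iff)
    qed
    ultimately show ?thesis by blast
  next
    case False
    then obtain w where w: "w \<noteq> 0" "A *v w = 0"
      using linear_injective_0[OF matrix_vector_mul_linear[of A]]
      by (metis inj_on_def matrix_vector_mult_0_right)
    have wS: "w $ l = 0" if "l \<in> S" for l
      using AS[OF that, of w] w by simp
    have "J *v w = 0"
    proof (subst vec_eq_iff, intro allI)
      fix j
      show "(J *v w) $ j = 0 $ j"
        using JS[OF _ wS, of j] AnS[OF _ wS, of j] w by (cases "j \<in> S") auto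
    qed
    then show ?thesis using w by blast
  qed
qed


lemma in_Inp_down:
  assumes net: "io_network Inp out E" and "l \<notin> d_nodes Inp out E"
  shows "\<exists>i\<in>Inp. downstream E i l"
proof (cases "l \<in> Inp")
  case True then show ?thesis by (auto simp: downstream_def)
next
  case False
  show ?thesis
  proof (cases "l = out")
    case True
    then show ?thesis using net unfolding io_network_def by auto
  next
    case False
    then show ?thesis using assms \<open>l \<notin> Inp\<close> unfolding d_nodes_def by auto
  qed
qed

lemma d_pred:
  assumes net: "io_network Inp out E" and j: "j \<in> d_nodes Inp out E" and e: "(l, j) \<in> E"
  shows "l \<in> d_nodes Inp out E"
proof (rule ccontr)
  assume "l \<notin> d_nodes Inp out E"
  then obtain i where "i \<in> Inp" "downstream E i l" using in_Inp_down[OF net] by blast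
  then have "downstream E i j" using e unfolding downstream_def by auto
  then show False using j \<open>i \<in> Inp\<close> unfolding d_nodes_def by auto
qed

lemma core_up:
  assumes net: "io_network Inp out E" and j: "j \<in> core_nodes Inp out E"
  shows "downstream E j out"
  using j net unfolding core_nodes_def sigma_nodes_def io_network_def
  by (auto simp: downstream_def)

lemma core_not_d:
  assumes net: "io_network Inp out E" and j: "j \<in> core_nodes Inp out E"
  shows "j \<notin> d_nodes Inp out E"
  using j unfolding core_nodes_def sigma_nodes_def d_nodes_def by (auto simp: downstream_def)

lemma core_pred:
  assumes net: "io_network Inp out E" and j: "j \<in> core_nodes Inp out E" and e: "(l, j) \<in> E"
  shows "l \<in> core_nodes Inp out E \<or> l \<in> d_nodes Inp out E"
proof (rule ccontr)
  assume nn: "\<not> (l \<in> core_nodes Inp out E \<or> l \<in> d_nodes Inp out E)"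
  have "downstream E l out" using core_up[OF net j] e unfolding downstream_def
    by (meson converse_rtrancl_into_rtrancl)
  moreover obtain i where "i \<in> Inp" "downstream E i l" using in_Inp_down[OF net] nn by blast
  ultimately have "l \<in> sigma_nodes Inp out E" using nn unfolding sigma_nodes_def core_nodes_def by auto
  then show False using nn unfolding core_nodes_def by auto
qed


theorem theorem3p2:
  fixes Inp :: "'n::finite set" and out :: 'n and E :: "('n \<times> 'n) set"
    and f :: "'n \<Rightarrow> real^'n \<Rightarrow> real \<Rightarrow> real"
    and X Xc :: "real \<Rightarrow> real^'n" and U V :: "real set" and I0 :: real
  assumes net: "io_network Inp out E"
    and adm: "admissible Inp E f"
    and U: "open U" "I0 \<in> U"
    and X_smooth: "\<forall>j. smooth_on U (\<lambda>I. X I $ j)"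
    and X_eq: "\<forall>I\<in>U. (\<forall>j. f j (X I) I = 0) \<and> linearly_stable UNIV (jac f (X I) I)"
    and V: "open V" "I0 \<in> V"
    and Xc_smooth: "\<forall>j\<in>core_nodes Inp out E. smooth_on V (\<lambda>I. Xc I $ j)"
    and Xc_eq: "\<forall>I\<in>V.
         (\<forall>j\<in>core_nodes Inp out E. f j (freeze (d_nodes Inp out E) (X I0) (Xc I)) I = 0) \<and>
         linearly_stable (core_nodes Inp out E)
           (jac f (freeze (d_nodes Inp out E) (X I0) (Xc I)) I)"
    and Xc_corr: "\<forall>j\<in>core_nodes Inp out E. Xc I0 $ j = X I0 $ j"
  shows "deriv (\<lambda>I. Xc I $ out) I0 = 0 \<longleftrightarrow> deriv (\<lambda>I. X I $ out) I0 = 0"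
proof -
  define C where "C = core_nodes Inp out E"
  define D where "D = d_nodes Inp out E"
  define x0 where "x0 = X I0"
  define J0 where "J0 = jac f x0 I0"
  define a where "a = (\<lambda>l. deriv (\<lambda>I. X I $ l) I0)"
  define c where "c = (\<lambda>l. if l \<in> C then deriv (\<lambda>I. Xc I $ l) I0 else 0)"
  define Y where "Y = (\<lambda>I. \<chi> l. if l \<in> C then Xc I $ l else x0 $ l)"
  have CD: "l \<in> C \<Longrightarrow> l \<notin> D" for l using core_not_d[OF net] unfolding C_def D_def by blast
  have outC: "out \<in> C" unfolding C_def core_nodes_def by simp
  have Xd: "((\<lambda>I. X I $ l) has_field_derivative a l) (at I0)" for l
  proof -
    have "(\<lambda>I. X I $ l) differentiable (at I0)"
      using X_smooth U unfolding smooth_on_def by (metis iter_dirderiv.simps(1))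
    then show ?thesis unfolding a_def using DERIV_deriv_iff_real_differentiable by blast
  qed
  have Yd: "((\<lambda>I. Y I $ l) has_field_derivative c l) (at I0)" for l
  proof (cases "l \<in> C")
    case True
    have "(\<lambda>I. Xc I $ l) differentiable (at I0)"
      using Xc_smooth V True unfolding smooth_on_def C_def by (metis iter_dirderiv.simps(1))
    then show ?thesis unfolding c_def Y_def using True DERIV_deriv_iff_real_differentiable by simp
  next
    case False
    then show ?thesis unfolding c_def Y_def by simp
  qed
  have Y0: "Y I0 = x0"
    using Xc_corr unfolding Y_def x0_def C_def by (simp add: vec_eq_iff)
  have chX: "(\<Sum>l\<in>UNIV. J0 $ j $ l * a l) + deriv (\<lambda>J. f j x0 J) I0 = 0" for j
    unfolding J0_def
    by (rule chain[OF adm Xd _ U]) (use X_eq x0_def in auto)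
  have chY: "(\<Sum>l\<in>UNIV. J0 $ j $ l * c l) + deriv (\<lambda>J. f j x0 J) I0 = 0" if j: "j \<in> C" for j
    unfolding J0_def
  proof (rule chain[OF adm Yd Y0 V])
    fix I assume I: "I \<in> V"
    have "f j (Y I) I = f j (freeze D x0 (Xc I)) I"
    proof (rule indep[OF adm])
      fix l assume "l = j \<or> (l, j) \<in> E"
      then have "l \<in> C \<or> l \<in> D" using j core_pred[OF net] unfolding C_def D_def by blast
      then show "Y I $ l = freeze D x0 (Xc I) $ l"
        using CD unfolding Y_def freeze_def by auto
    qed
    then show "f j (Y I) I = 0" using Xc_eq I j unfolding C_def D_def x0_def by simp
  qed
  have J0D: "J0 $ j $ l = 0" if "j \<in> D" "l \<notin> D" for j l
  proof -
    have "l \<noteq> j" "(l, j) \<notin> E" using that d_pred[OF net] unfolding D_def by auto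
    then show ?thesis using adm unfolding admissible_def J0_def jac_def by simp
  qed
  have fID: "deriv (\<lambda>J. f j x0 J) I0 = 0" if "j \<in> D" for j
  proof -
    have "j \<notin> Inp" using that unfolding D_def d_nodes_def by auto
    then have "f j x0 J = f j x0 I0" for J
      using conjunct1[OF conjunct2[OF adm[unfolded admissible_def]]] by simp
    then have "(\<lambda>J. f j x0 J) = (\<lambda>J. f j x0 I0)" by (rule ext)
    then have "deriv (\<lambda>J. f j x0 J) I0 = deriv (\<lambda>J. f j x0 I0) I0"
      by (rule arg_cong[where f="\<lambda>g. deriv g I0"])
    also have "\<dots> = 0" by simp
    finally show ?thesis .
  qed
  have aD: "a l = 0" if "l \<in> D" for l
  proof (rule ccontr)
    assume al: "a l \<noteq> 0"
    define v :: "real^'n" where "v = (\<chi> l. if l \<in> D then a l else 0)"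
    have "v \<noteq> 0" using al that unfolding v_def by (auto simp: vec_eq_iff)
    moreover have "(J0 *v v) $ j = 0" if "j \<in> D" for j
    proof -
      have "(J0 *v v) $ j = (\<Sum>l\<in>UNIV. J0 $ j $ l * a l)"
        unfolding mv_comp v_def using J0D[OF that] by (intro sum.cong) auto
      then show ?thesis using chX[of j] fID[OF that] by simp
    qed
    ultimately obtain w where w: "w \<noteq> 0" "J0 *v w = 0"
      using block_sing[of D J0 v] J0D unfolding v_def by auto
    have "sub_eigenvalue UNIV J0 0"
      unfolding sub_eigenvalue_def
    proof (intro exI[of _ "\<lambda>l. complex_of_real (w $ l)"] conjI ballI)
      show "\<exists>i\<in>UNIV. complex_of_real (w $ i) \<noteq> 0" using w by (auto simp: vec_eq_iff)
      fix j
      have "(\<Sum>l\<in>UNIV. complex_of_real (J0 $ j $ l) * complex_of_real (w $ l)) =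
            complex_of_real ((J0 *v w) $ j)" unfolding mv_comp by simp
      then show "(\<Sum>l\<in>UNIV. complex_of_real (J0 $ j $ l) * complex_of_real (w $ l)) =
            0 * complex_of_real (w $ j)" using w by simp
    qed
    moreover have "linearly_stable UNIV J0" using X_eq U unfolding J0_def x0_def by blast
    ultimately show False unfolding linearly_stable_def by fastforce
  qed
  define \<delta> where "\<delta> = (\<lambda>l. a l - c l)"
  have J0u: "J0 $ j $ l = 0" if "j \<in> C" "l \<notin> C" "l \<notin> D" for j l
  proof -
    have "l \<noteq> j" "(l, j) \<notin> E" using that core_pred[OF net] unfolding C_def D_def by auto
    then show ?thesis using adm unfolding admissible_def J0_def jac_def by simp
  qed
  have coreq: "(\<Sum>l\<in>C. J0 $ j $ l * \<delta> l) = 0" if j: "j \<in> C" for j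
  proof -
    have "(\<Sum>l\<in>C. J0 $ j $ l * \<delta> l) = (\<Sum>l\<in>UNIV. if l \<in> C then J0 $ j $ l * \<delta> l else 0)"
      using sum.inter_restrict[of UNIV "\<lambda>l. J0 $ j $ l * \<delta> l" C] by simp
    also have "\<dots> = (\<Sum>l\<in>UNIV. J0 $ j $ l * a l - J0 $ j $ l * c l)"
    proof (intro sum.cong refl)
      fix l
      show "(if l \<in> C then J0 $ j $ l * \<delta> l else 0) = J0 $ j $ l * a l - J0 $ j $ l * c l"
        using aD[of l] J0u[OF j, of l] unfolding \<delta>_def c_def by (auto simp: algebra_simps)
    qed
    also have "\<dots> = 0" using chX[of j] chY[OF j] by (simp add: sum_subtractf)
    finally show ?thesis .
  qed
  define Jc where "Jc = jac f (freeze D x0 (Xc I0)) I0"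
  have JcJ0: "Jc $ j $ l = J0 $ j $ l" if j: "j \<in> C" and l: "l \<in> C" for j l
  proof -
    let ?z = "freeze D x0 (Xc I0)"
    have zl: "?z $ l = x0 $ l" using l CD Xc_corr unfolding freeze_def x0_def C_def by auto
    have "f j (upd ?z l t) I0 = f j (upd x0 l t) I0" for t
    proof (rule indep[OF adm])
      fix m assume "m = j \<or> (m, j) \<in> E"
      then have "m \<in> C \<or> m \<in> D" using j core_pred[OF net] unfolding C_def D_def by blast
      then show "upd ?z l t $ m = upd x0 l t $ m"
        using CD Xc_corr unfolding freeze_def x0_def C_def by auto
    qed
    then show ?thesis unfolding Jc_def J0_def jac_def using zl by simp
  qed
  have \<delta>C: "\<delta> l = 0" if "l \<in> C" for l
  proof (rule ccontr)
    assume dl: "\<delta> l \<noteq> 0"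
    have "sub_eigenvalue C Jc 0"
      unfolding sub_eigenvalue_def
    proof (intro exI[of _ "\<lambda>l. complex_of_real (\<delta> l)"] conjI ballI)
      show "\<exists>i\<in>C. complex_of_real (\<delta> i) \<noteq> 0" using dl that by auto
      fix j assume j: "j \<in> C"
      have "(\<Sum>l\<in>C. complex_of_real (Jc $ j $ l) * complex_of_real (\<delta> l)) =
            complex_of_real (\<Sum>l\<in>C. J0 $ j $ l * \<delta> l)" using JcJ0[OF j] by simp
      then show "(\<Sum>l\<in>C. complex_of_real (Jc $ j $ l) * complex_of_real (\<delta> l)) =
            0 * complex_of_real (\<delta> j)" using coreq[OF j] by simp
    qed
    moreover have "linearly_stable C Jc" using Xc_eq V unfolding Jc_def C_def D_def x0_def by blast
    ultimately show False unfolding linearly_stable_def by fastforce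
  qed
  have "a out = c out" using \<delta>C[OF outC] unfolding \<delta>_def by simp
  then show ?thesis unfolding a_def c_def using outC by simp
qed

end
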